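(* For a ternary cubic form $f$, $F_{6u}=0$ (identically in $u$) if and only if $f=a_xb_x^2$ for some linear forms $a_x$ and $b_x$.
   Context: Forms are homogeneous polynomials with complex coefficients in $x=(x_1,x_2,x_3)$; $u=(u_1,u_2,u_3)$ are indeterminates and $u_x=\sum u_ix_i$. The $n$-th transvectant is $J^n[f,g,h]=\big(\Omega^n(f(x)g(y)h(z))\big)|_{y=z=x}$, where $\Omega$ is the determinant of the operator matrix with rows $(\partial/\partial x_i)$, $(\partial/\partial y_i)$, $(\partial/\partial z_i)$, and $u$ is treated as constant. For a ternary cubic $f$ let $\theta=\tfrac14J^2[f,f,u_x^2]$ and $F_{6u}=\tfrac1{3072}J^2[\theta,\theta,u_x^2]$, a form of degree 6 in $u$. *)

theory Defs
  imports "HOL-Analysis.Analysis"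
begin

text \<open>Points of C^3 are vectors of type complex^3.  A form is represented by its
polynomial function C^3 -> C.\<close>

definition lin :: "complex^3 \<Rightarrow> complex^3 \<Rightarrow> complex" where
  "lin a x = (\<Sum>i\<in>UNIV. a$i * x$i)"

definition ternary_form :: "nat \<Rightarrow> (complex^3 \<Rightarrow> complex) \<Rightarrow> bool" where
  "ternary_form d f \<longleftrightarrow> (\<exists>c :: nat \<Rightarrow> nat \<Rightarrow> nat \<Rightarrow> complex.
     \<forall>x. f x = (\<Sum>(i,j,k)\<in>{(i,j,k). i + j + k = d}.
                   c i j k * x$1 ^ i * x$2 ^ j * x$3 ^ k))"

definition upd :: "complex^3 \<Rightarrow> 3 \<Rightarrow> complex \<Rightarrow> complex^3" where
  "upd x i t = (\<chi> j. if j = i then t else x$j)"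

type_synonym fun3 = "complex^3 \<Rightarrow> complex^3 \<Rightarrow> complex^3 \<Rightarrow> complex"

definition dX :: "3 \<Rightarrow> fun3 \<Rightarrow> fun3" where
  "dX i F = (\<lambda>x y z. deriv (\<lambda>t. F (upd x i t) y z) (x$i))"
definition dY :: "3 \<Rightarrow> fun3 \<Rightarrow> fun3" where
  "dY i F = (\<lambda>x y z. deriv (\<lambda>t. F x (upd y i t) z) (y$i))"
definition dZ :: "3 \<Rightarrow> fun3 \<Rightarrow> fun3" where
  "dZ i F = (\<lambda>x y z. deriv (\<lambda>t. F x y (upd z i t)) (z$i))"

definition Omega :: "fun3 \<Rightarrow> fun3" where
  "Omega F = (\<lambda>x y z. \<Sum>\<sigma>\<in>{\<sigma>. \<sigma> permutes (UNIV :: 3 set)}.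
      of_int (sign \<sigma>) * dX (\<sigma> 1) (dY (\<sigma> 2) (dZ (\<sigma> 3) F)) x y z)"

definition transvectant :: "nat \<Rightarrow> (complex^3 \<Rightarrow> complex) \<Rightarrow> (complex^3 \<Rightarrow> complex)
    \<Rightarrow> (complex^3 \<Rightarrow> complex) \<Rightarrow> complex^3 \<Rightarrow> complex" where
  "transvectant n f g h = (\<lambda>x. (Omega ^^ n) (\<lambda>x y z. f x * g y * h z) x x x)"

definition ux2 :: "complex^3 \<Rightarrow> complex^3 \<Rightarrow> complex" where
  "ux2 u = (\<lambda>x. (lin u x)^2)"

definition theta :: "(complex^3 \<Rightarrow> complex) \<Rightarrow> complex^3 \<Rightarrow> complex^3 \<Rightarrow> complex" where
  "theta f u = (\<lambda>x. (1/4) * transvectant 2 f f (ux2 u) x)"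

definition F6u :: "(complex^3 \<Rightarrow> complex) \<Rightarrow> complex^3 \<Rightarrow> complex^3 \<Rightarrow> complex" where
  "F6u f u = (\<lambda>x. (1/3072) * transvectant 2 (theta f u) (theta f u) (ux2 u) x)"

end

theory Submission
  imports Defs
begin


definition pd :: "3 \<Rightarrow> (complex^3 \<Rightarrow> complex) \<Rightarrow> complex^3 \<Rightarrow> complex" where
  "pd i g = (\<lambda>x. deriv (\<lambda>t. g (upd x i t)) (x$i))"

inductive pf :: "(complex^3 \<Rightarrow> complex) \<Rightarrow> bool" where
  pf_const[simp,intro]: "pf (\<lambda>x. c)"
| pf_coord[simp,intro]: "pf (\<lambda>x. x$j)"
| pf_add[simp,intro]: "pf f \<Longrightarrow> pf g \<Longrightarrow> pf (\<lambda>x. f x + g x)"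
| pf_mult[simp,intro]: "pf f \<Longrightarrow> pf g \<Longrightarrow> pf (\<lambda>x. f x * g x)"

lemma upd_nth[simp]: "upd x i t $ j = (if j = i then t else x$j)"
  by (simp add: upd_def)
lemma upd_upd[simp]: "upd (upd x i s) i t = upd x i t"
  by (simp add: upd_def vec_eq_iff)
lemma upd_same[simp]: "upd x i (x$i) = x"
  by (simp add: upd_def vec_eq_iff)

lemma pf_diff: "pf f \<Longrightarrow> (\<lambda>t. f (upd x i t)) field_differentiable (at t0)"
proof (induction arbitrary: t0 rule: pf.induct)
  case (pf_const c) then show ?case by simp
next
  case (pf_coord j) then show ?case
    by (cases "j = i") (simp_all add: field_differentiable_ident)
next
  case (pf_add f g) then show ?case by (simp add: field_differentiable_add)
next
  case (pf_mult f g) then show ?case by (simp add: field_differentiable_mult)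
qed

lemma pd_const[simp]: "pd i (\<lambda>x. c) = (\<lambda>x. 0)"
  by (simp add: pd_def)
lemma pd_coord[simp]: "pd i (\<lambda>x. x$j) = (\<lambda>x. if j = i then 1 else 0)"
  by (rule ext) (simp add: pd_def)
lemma pd_add[simp]: "pf f \<Longrightarrow> pf g \<Longrightarrow> pd i (\<lambda>x. f x + g x) = (\<lambda>x. pd i f x + pd i g x)"
  by (rule ext) (simp add: pd_def deriv_add pf_diff)
lemma pd_mult[simp]: "pf f \<Longrightarrow> pf g \<Longrightarrow> pd i (\<lambda>x. f x * g x) = (\<lambda>x. pd i f x * g x + f x * pd i g x)"
  by (rule ext) (simp add: pd_def deriv_mult pf_diff algebra_simps)

lemma pf_pd[simp,intro]: "pf f \<Longrightarrow> pf (pd i f)"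
proof (induction rule: pf.induct)
  case (pf_coord j) show ?case by (simp add: if_distrib cong: if_cong)
qed (simp_all)



lemma pf_sum[simp,intro]: "finite K \<Longrightarrow> (\<And>k. k \<in> K \<Longrightarrow> pf (F k)) \<Longrightarrow> pf (\<lambda>x. \<Sum>k\<in>K. F k x)"
  by (induction K rule: finite_induct) (auto intro: pf.intros)

lemma pd_sum: "finite K \<Longrightarrow> (\<And>k. k \<in> K \<Longrightarrow> pf (F k)) \<Longrightarrow> pd i (\<lambda>x. \<Sum>k\<in>K. F k x) = (\<lambda>x. \<Sum>k\<in>K. pd i (F k) x)"
proof (induction K rule: finite_induct)
  case empty then show ?case by simp
next
  case (insert a K)
  have "pd i (\<lambda>x. \<Sum>k\<in>insert a K. F k x) = pd i (\<lambda>x. F a x + (\<Sum>k\<in>K. F k x))"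
    using insert by simp
  also have "\<dots> = (\<lambda>x. pd i (F a) x + pd i (\<lambda>x. \<Sum>k\<in>K. F k x) x)"
    using insert by (subst pd_add) auto
  finally show ?case using insert by simp
qed

lemma pd_cmult[simp]: "pf f \<Longrightarrow> pd i (\<lambda>x. c * f x) = (\<lambda>x. c * pd i f x)"
  by simp

lemma pf_minus[simp,intro]: "pf f \<Longrightarrow> pf g \<Longrightarrow> pf (\<lambda>x. f x - g x)"
proof -
  assume "pf f" "pf g"
  then have "pf (\<lambda>x. f x + (-1) * g x)" by (intro pf.intros)
  then show ?thesis by simp
qed

lemma pd_minus[simp]: "pf f \<Longrightarrow> pf g \<Longrightarrow> pd i (\<lambda>x. f x - g x) = (\<lambda>x. pd i f x - pd i g x)"
  by (rule ext) (simp add: pd_def deriv_diff pf_diff)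

lemma pf_pow[simp,intro]: "pf f \<Longrightarrow> pf (\<lambda>x. f x ^ n)"
  by (induction n) (auto intro: pf.intros)

lemma pd_pow[simp]: "pf f \<Longrightarrow> pd i (\<lambda>x. f x ^ n) = (\<lambda>x. of_nat n * f x ^ (n - 1) * pd i f x)"
proof (induction n)
  case 0 then show ?case by simp
next
  case (Suc n)
  have "pd i (\<lambda>x. f x ^ Suc n) = pd i (\<lambda>x. f x * f x ^ n)" by simp
  also have "\<dots> = (\<lambda>x. pd i f x * f x ^ n + f x * pd i (\<lambda>x. f x ^ n) x)"
    using Suc by (subst pd_mult) auto
  finally show ?case using Suc by (cases n) (auto simp: algebra_simps)
qed

lemma mv_nth: "(M *v x) $ j = (\<Sum>k\<in>UNIV. M$j$k * x$k)"
  by (simp add: matrix_vector_mult_def)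

lemma pf_comp: "pf f \<Longrightarrow> pf (\<lambda>x. f (M *v x))"
proof (induction rule: pf.induct)
  case (pf_coord j) show ?case unfolding mv_nth by (intro pf_sum) auto
qed (auto intro: pf.intros)

lemma pd_comp: "pf f \<Longrightarrow> pd i (\<lambda>x. f (M *v x)) = (\<lambda>x. \<Sum>j\<in>UNIV. M$j$i * pd j f (M *v x))"
proof (induction rule: pf.induct)
  case (pf_const c) then show ?case by simp
next
  case (pf_coord j)
  have "pd i (\<lambda>x. (M *v x) $ j) = pd i (\<lambda>x. \<Sum>k\<in>UNIV. M$j$k * x$k)" unfolding mv_nth ..
  also have "\<dots> = (\<lambda>x. \<Sum>k\<in>UNIV. M$j$k * (if k = i then 1 else 0))"
    by (subst pd_sum) auto
  finally show ?case by (simp add: if_distrib cong: if_cong)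
next
  case (pf_add f g)
  then show ?case using pf_comp[OF pf_add(1)] pf_comp[OF pf_add(2)]
    by (simp add: sum.distrib algebra_simps)
next
  case (pf_mult f g)
  then show ?case using pf_comp[OF pf_mult(1)] pf_comp[OF pf_mult(2)]
    by (simp add: sum.distrib sum_distrib_left sum_distrib_right algebra_simps)
qed



lemma dZ_tensor: "finite K \<Longrightarrow> (\<And>k. k \<in> K \<Longrightarrow> pf (R k)) \<Longrightarrow>
  dZ c (\<lambda>x y z. \<Sum>k\<in>K. P k x * Q k y * R k z) = (\<lambda>x y z. \<Sum>k\<in>K. P k x * Q k y * pd c (R k) z)"
proof (intro ext)
  fix x y z assume K: "finite K" "\<And>k. k \<in> K \<Longrightarrow> pf (R k)"
  have "dZ c (\<lambda>x y z. \<Sum>k\<in>K. P k x * Q k y * R k z) x y z = pd c (\<lambda>z. \<Sum>k\<in>K. (P k x * Q k y) * R k z) z"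
    by (simp add: dZ_def pd_def mult.assoc)
  also have "\<dots> = (\<Sum>k\<in>K. P k x * Q k y * pd c (R k) z)"
    using K by (subst pd_sum) (auto simp: mult.assoc)
  finally show "dZ c (\<lambda>x y z. \<Sum>k\<in>K. P k x * Q k y * R k z) x y z = (\<Sum>k\<in>K. P k x * Q k y * pd c (R k) z)" .
qed

lemma dY_tensor: "finite K \<Longrightarrow> (\<And>k. k \<in> K \<Longrightarrow> pf (Q k)) \<Longrightarrow>
  dY c (\<lambda>x y z. \<Sum>k\<in>K. P k x * Q k y * R k z) = (\<lambda>x y z. \<Sum>k\<in>K. P k x * pd c (Q k) y * R k z)"
proof (intro ext)
  fix x y z assume K: "finite K" "\<And>k. k \<in> K \<Longrightarrow> pf (Q k)"
  have "dY c (\<lambda>x y z. \<Sum>k\<in>K. P k x * Q k y * R k z) x y z = pd c (\<lambda>y. \<Sum>k\<in>K. (P k x * R k z) * Q k y) y"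
    by (simp add: dY_def pd_def algebra_simps)
  also have "\<dots> = (\<Sum>k\<in>K. P k x * pd c (Q k) y * R k z)"
    using K by (subst pd_sum) (auto simp: algebra_simps)
  finally show "dY c (\<lambda>x y z. \<Sum>k\<in>K. P k x * Q k y * R k z) x y z = (\<Sum>k\<in>K. P k x * pd c (Q k) y * R k z)" .
qed

lemma dX_tensor: "finite K \<Longrightarrow> (\<And>k. k \<in> K \<Longrightarrow> pf (P k)) \<Longrightarrow>
  dX c (\<lambda>x y z. \<Sum>k\<in>K. P k x * Q k y * R k z) = (\<lambda>x y z. \<Sum>k\<in>K. pd c (P k) x * Q k y * R k z)"
proof (intro ext)
  fix x y z assume K: "finite K" "\<And>k. k \<in> K \<Longrightarrow> pf (P k)"
  have "dX c (\<lambda>x y z. \<Sum>k\<in>K. P k x * Q k y * R k z) x y z = pd c (\<lambda>x. \<Sum>k\<in>K. (Q k y * R k z) * P k x) x"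
    by (simp add: dX_def pd_def algebra_simps)
  also have "\<dots> = (\<Sum>k\<in>K. pd c (P k) x * Q k y * R k z)"
    using K by (subst pd_sum) (auto simp: algebra_simps)
  finally show "dX c (\<lambda>x y z. \<Sum>k\<in>K. P k x * Q k y * R k z) x y z = (\<Sum>k\<in>K. pd c (P k) x * Q k y * R k z)" .
qed

abbreviation "perms3 \<equiv> {\<sigma>. \<sigma> permutes (UNIV :: 3 set)}"

lemma finite_perms3[simp]: "finite perms3"
  by (simp add: finite_permutations)

lemma Omega_tensor:
  assumes "finite K" "\<And>k. k \<in> K \<Longrightarrow> pf (P k) \<and> pf (Q k) \<and> pf (R k)"
  shows "Omega (\<lambda>x y z. \<Sum>k\<in>K. P k x * Q k y * R k z) =
     (\<lambda>x y z. \<Sum>k\<in>K. \<Sum>\<sigma>\<in>perms3. of_int (sign \<sigma>) * pd (\<sigma> 1) (P k) x * pd (\<sigma> 2) (Q k) y * pd (\<sigma> 3) (R k) z)"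
proof (intro ext)
  fix x y z
  have "Omega (\<lambda>x y z. \<Sum>k\<in>K. P k x * Q k y * R k z) x y z =
     (\<Sum>\<sigma>\<in>perms3. of_int (sign \<sigma>) * (\<Sum>k\<in>K. pd (\<sigma> 1) (P k) x * pd (\<sigma> 2) (Q k) y * pd (\<sigma> 3) (R k) z))"
    unfolding Omega_def using assms
    by (simp add: dZ_tensor dY_tensor dX_tensor)
  also have "\<dots> = (\<Sum>k\<in>K. \<Sum>\<sigma>\<in>perms3. of_int (sign \<sigma>) * pd (\<sigma> 1) (P k) x * pd (\<sigma> 2) (Q k) y * pd (\<sigma> 3) (R k) z)"
    by (subst sum.swap) (simp add: sum_distrib_left mult.assoc)
  finally show "Omega (\<lambda>x y z. \<Sum>k\<in>K. P k x * Q k y * R k z) x y z = (\<Sum>k\<in>K. \<Sum>\<sigma>\<in>perms3. of_int (sign \<sigma>) * pd (\<sigma> 1) (P k) x * pd (\<sigma> 2) (Q k) y * pd (\<sigma> 3) (R k) z)" .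
qed

lemma T2:
  assumes "pf f" "pf g" "pf h"
  shows "transvectant 2 f g h x = (\<Sum>\<sigma>\<in>perms3. \<Sum>\<tau>\<in>perms3. of_int (sign \<sigma> * sign \<tau>) *
     pd (\<tau> 1) (pd (\<sigma> 1) f) x * pd (\<tau> 2) (pd (\<sigma> 2) g) x * pd (\<tau> 3) (pd (\<sigma> 3) h) x)"
proof -
  have F: "(\<lambda>x y z. f x * g y * h z) = (\<lambda>x y z. \<Sum>k\<in>{()}. f x * g y * h z)" by simp
  have O1: "Omega (\<lambda>x y z. f x * g y * h z) = (\<lambda>x y z. \<Sum>\<sigma>\<in>perms3. (\<lambda>x. of_int (sign \<sigma>) * pd (\<sigma> 1) f x) x * pd (\<sigma> 2) g y * pd (\<sigma> 3) h z)"
    unfolding F using assms by (subst Omega_tensor) (auto simp: mult.assoc)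
  have O2: "Omega (Omega (\<lambda>x y z. f x * g y * h z)) = (\<lambda>x y z. \<Sum>\<sigma>\<in>perms3. \<Sum>\<tau>\<in>perms3. of_int (sign \<tau>) * pd (\<tau> 1) (\<lambda>x. of_int (sign \<sigma>) * pd (\<sigma> 1) f x) x * pd (\<tau> 2) (pd (\<sigma> 2) g) y * pd (\<tau> 3) (pd (\<sigma> 3) h) z)"
    unfolding O1 using assms by (subst Omega_tensor) auto
  show ?thesis
    unfolding transvectant_def using assms
    by (simp add: numeral_2_eq_2 O2) (simp add: algebra_simps)
qed



lemma perms3_sum:
  fixes h :: "3 \<Rightarrow> 3 \<Rightarrow> 3 \<Rightarrow> 'a::comm_ring_1"
  shows "(\<Sum>\<sigma>\<in>perms3. of_int (sign \<sigma>) * h (\<sigma> 1) (\<sigma> 2) (\<sigma> 3)) =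
    h 1 2 3 - h 1 3 2 - h 2 1 3 + h 2 3 1 + h 3 1 2 - h 3 2 1"
proof -
  have f123: "finite {2::3, 3}" "1 \<notin> {2::3, 3}"
    by auto
  have f23: "finite {3::3}" "2 \<notin> {3::3}"
    by auto
  show ?thesis
    unfolding UNIV_3
    unfolding sum_over_permutations_insert[OF f123]
    unfolding sum_over_permutations_insert[OF f23]
    unfolding permutes_sing
    by (simp add: sign_swap_id permutation_swap_id sign_compose sign_id swap_id_eq algebra_simps)
qed

lemma LC:
  fixes M :: "complex^3^3"
  shows "(\<Sum>\<sigma>\<in>perms3. of_int (sign \<sigma>) * ((\<Sum>j\<in>UNIV. M$j$(\<sigma> 1) * a j) * (\<Sum>j\<in>UNIV. M$j$(\<sigma> 2) * b j) * (\<Sum>j\<in>UNIV. M$j$(\<sigma> 3) * c j)))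
    = det M * (\<Sum>\<sigma>\<in>perms3. of_int (sign \<sigma>) * (a (\<sigma> 1) * b (\<sigma> 2) * c (\<sigma> 3)))"
  apply (subst perms3_sum[where h="\<lambda>p q r. (\<Sum>j\<in>UNIV. M$j$p * a j) * (\<Sum>j\<in>UNIV. M$j$q * b j) * (\<Sum>j\<in>UNIV. M$j$r * c j)"])
  apply (subst perms3_sum[where h="\<lambda>p q r. a p * b q * c r"])
  apply (simp only: sum_3 det_3)
  apply algebra
  done



lemma swap_dsum: "(\<Sum>j\<in>UNIV. \<Sum>k\<in>UNIV. (M::complex^3^3)$j$s * M$k$t * X j k) = (\<Sum>k\<in>UNIV. M$k$t * (\<Sum>j\<in>UNIV. M$j$s * X j k))"
  by (subst sum.swap) (simp add: sum_distrib_left algebra_simps)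

lemma aux_swap: "(\<Sum>\<sigma>\<in>S. a \<sigma> * (d::complex) * (\<Sum>\<tau>\<in>T. b \<tau> * P \<sigma> \<tau>)) = d * (\<Sum>\<tau>\<in>T. b \<tau> * (\<Sum>\<sigma>\<in>S. a \<sigma> * P \<sigma> \<tau>))"
  by (simp add: sum_distrib_left sum.swap[of _ T S] mult_ac)

lemma cov_core:
  fixes M :: "complex^3^3" and X1 X2 X3 :: "3 \<Rightarrow> 3 \<Rightarrow> complex"
  shows "(\<Sum>\<sigma>\<in>perms3. \<Sum>\<tau>\<in>perms3. of_int (sign \<sigma>) * of_int (sign \<tau>) *
      (\<Sum>j\<in>UNIV. \<Sum>k\<in>UNIV. M$j$(\<sigma> 1) * M$k$(\<tau> 1) * X1 j k) *
      (\<Sum>j\<in>UNIV. \<Sum>k\<in>UNIV. M$j$(\<sigma> 2) * M$k$(\<tau> 2) * X2 j k) *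
      (\<Sum>j\<in>UNIV. \<Sum>k\<in>UNIV. M$j$(\<sigma> 3) * M$k$(\<tau> 3) * X3 j k))
   = det M ^ 2 * (\<Sum>\<sigma>\<in>perms3. \<Sum>\<tau>\<in>perms3. of_int (sign \<sigma>) * of_int (sign \<tau>) *
      X1 (\<sigma> 1) (\<tau> 1) * X2 (\<sigma> 2) (\<tau> 2) * X3 (\<sigma> 3) (\<tau> 3))"
proof -
  define Y where "Y X s k = (\<Sum>j\<in>UNIV. M$j$s * X j k)" for X :: "3 \<Rightarrow> 3 \<Rightarrow> complex" and s k
  have step1: "(\<Sum>\<tau>\<in>perms3. of_int (sign \<sigma>) * of_int (sign \<tau>) *
      (\<Sum>j\<in>UNIV. \<Sum>k\<in>UNIV. M$j$(\<sigma> 1) * M$k$(\<tau> 1) * X1 j k) *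
      (\<Sum>j\<in>UNIV. \<Sum>k\<in>UNIV. M$j$(\<sigma> 2) * M$k$(\<tau> 2) * X2 j k) *
      (\<Sum>j\<in>UNIV. \<Sum>k\<in>UNIV. M$j$(\<sigma> 3) * M$k$(\<tau> 3) * X3 j k))
     = of_int (sign \<sigma>) * det M * (\<Sum>\<tau>\<in>perms3. of_int (sign \<tau>) *
         (Y X1 (\<sigma> 1) (\<tau> 1) * Y X2 (\<sigma> 2) (\<tau> 2) * Y X3 (\<sigma> 3) (\<tau> 3)))" for \<sigma>
  proof -
    have "(\<Sum>\<tau>\<in>perms3. of_int (sign \<sigma>) * of_int (sign \<tau>) *
      (\<Sum>j\<in>UNIV. \<Sum>k\<in>UNIV. M$j$(\<sigma> 1) * M$k$(\<tau> 1) * X1 j k) *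
      (\<Sum>j\<in>UNIV. \<Sum>k\<in>UNIV. M$j$(\<sigma> 2) * M$k$(\<tau> 2) * X2 j k) *
      (\<Sum>j\<in>UNIV. \<Sum>k\<in>UNIV. M$j$(\<sigma> 3) * M$k$(\<tau> 3) * X3 j k))
      = of_int (sign \<sigma>) * (\<Sum>\<tau>\<in>perms3. of_int (sign \<tau>) *
      ((\<Sum>k\<in>UNIV. M$k$(\<tau> 1) * Y X1 (\<sigma> 1) k) *
      (\<Sum>k\<in>UNIV. M$k$(\<tau> 2) * Y X2 (\<sigma> 2) k) *
      (\<Sum>k\<in>UNIV. M$k$(\<tau> 3) * Y X3 (\<sigma> 3) k)))"
      unfolding swap_dsum Y_def[symmetric] by (subst sum_distrib_left) (rule sum.cong, auto simp: mult.assoc)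
    also have "\<dots> = of_int (sign \<sigma>) * det M * (\<Sum>\<tau>\<in>perms3. of_int (sign \<tau>) *
         (Y X1 (\<sigma> 1) (\<tau> 1) * Y X2 (\<sigma> 2) (\<tau> 2) * Y X3 (\<sigma> 3) (\<tau> 3)))"
      by (subst LC) simp
    finally show ?thesis .
  qed
  have "(\<Sum>\<sigma>\<in>perms3. \<Sum>\<tau>\<in>perms3. of_int (sign \<sigma>) * of_int (sign \<tau>) *
      (\<Sum>j\<in>UNIV. \<Sum>k\<in>UNIV. M$j$(\<sigma> 1) * M$k$(\<tau> 1) * X1 j k) *
      (\<Sum>j\<in>UNIV. \<Sum>k\<in>UNIV. M$j$(\<sigma> 2) * M$k$(\<tau> 2) * X2 j k) *
      (\<Sum>j\<in>UNIV. \<Sum>k\<in>UNIV. M$j$(\<sigma> 3) * M$k$(\<tau> 3) * X3 j k))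
     = det M * (\<Sum>\<tau>\<in>perms3. of_int (sign \<tau>) * (\<Sum>\<sigma>\<in>perms3. of_int (sign \<sigma>) *
         ((\<Sum>j\<in>UNIV. M$j$(\<sigma> 1) * X1 j (\<tau> 1)) * (\<Sum>j\<in>UNIV. M$j$(\<sigma> 2) * X2 j (\<tau> 2)) * (\<Sum>j\<in>UNIV. M$j$(\<sigma> 3) * X3 j (\<tau> 3)))))"
    unfolding step1 Y_def by (rule aux_swap)
  also have "\<dots> = det M * (\<Sum>\<tau>\<in>perms3. of_int (sign \<tau>) * (det M * (\<Sum>\<sigma>\<in>perms3. of_int (sign \<sigma>) *
         (X1 (\<sigma> 1) (\<tau> 1) * X2 (\<sigma> 2) (\<tau> 2) * X3 (\<sigma> 3) (\<tau> 3)))))"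
    by (subst LC) simp
  also have "\<dots> = det M ^ 2 * (\<Sum>\<sigma>\<in>perms3. \<Sum>\<tau>\<in>perms3. of_int (sign \<sigma>) * of_int (sign \<tau>) *
      X1 (\<sigma> 1) (\<tau> 1) * X2 (\<sigma> 2) (\<tau> 2) * X3 (\<sigma> 3) (\<tau> 3))"
    apply (subst sum.swap)
    apply (simp only: sum_distrib_left power2_eq_square)
    apply (rule sum.cong, simp)+
    apply (simp add: mult_ac)
    done
  finally show ?thesis .
qed

lemma pd_pd_comp:
  assumes "pf f"
  shows "pd t (pd s (\<lambda>x. f (M *v x))) x = (\<Sum>j\<in>UNIV. \<Sum>k\<in>UNIV. M$j$s * M$k$t * pd k (pd j f) (M *v x))"
proof -
  have "pd s (\<lambda>x. f (M *v x)) = (\<lambda>x. \<Sum>j\<in>UNIV. M$j$s * pd j f (M *v x))"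
    using assms by (rule pd_comp)
  then have "pd t (pd s (\<lambda>x. f (M *v x))) = pd t (\<lambda>x. \<Sum>j\<in>UNIV. M$j$s * pd j f (M *v x))" by simp
  also have "\<dots> = (\<lambda>x. \<Sum>j\<in>UNIV. M$j$s * pd t (\<lambda>x. pd j f (M *v x)) x)"
    using assms by (subst pd_sum) (auto intro!: pf_comp simp: pf_comp)
  also have "\<dots> = (\<lambda>x. \<Sum>j\<in>UNIV. M$j$s * (\<Sum>k\<in>UNIV. M$k$t * pd k (pd j f) (M *v x)))"
    using assms by (simp add: pd_comp)
  finally show ?thesis by (simp add: sum_distrib_left algebra_simps)
qed

lemma cov_T2:
  assumes "pf f" "pf g" "pf h"
  shows "transvectant 2 (\<lambda>x. f (M *v x)) (\<lambda>x. g (M *v x)) (\<lambda>x. h (M *v x)) x = det M ^ 2 * transvectant 2 f g h (M *v x)"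
  using assms by (simp add: T2 pf_comp pd_pd_comp cov_core)



lemma lin_transpose: "lin (transpose M *v v) x = lin v (M *v x)"
  unfolding lin_def matrix_vector_mult_def transpose_def
  by (simp add: sum_3 algebra_simps)

lemma ux2_transpose: "ux2 (transpose M *v v) = (\<lambda>x. ux2 v (M *v x))"
  unfolding ux2_def lin_transpose ..

lemma pf_ux2[simp,intro]: "pf (ux2 v)"
  unfolding ux2_def lin_def by (intro pf_pow pf_sum) auto

lemma T2_fun:
  assumes "pf f" "pf g" "pf h"
  shows "transvectant 2 f g h = (\<lambda>x. \<Sum>\<sigma>\<in>perms3. \<Sum>\<tau>\<in>perms3. of_int (sign \<sigma> * sign \<tau>) *
     pd (\<tau> 1) (pd (\<sigma> 1) f) x * pd (\<tau> 2) (pd (\<sigma> 2) g) x * pd (\<tau> 3) (pd (\<sigma> 3) h) x)"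
  using T2[OF assms] by (rule ext)

lemma pf_T2[simp,intro]: "pf f \<Longrightarrow> pf g \<Longrightarrow> pf h \<Longrightarrow> pf (transvectant 2 f g h)"
  by (subst T2_fun) auto

lemma pf_theta[simp,intro]: "pf f \<Longrightarrow> pf (theta f v)"
  unfolding theta_def by (intro pf_mult pf_const) auto

lemma T2_scale:
  assumes "pf F" "pf h"
  shows "transvectant 2 (\<lambda>x. c * F x) (\<lambda>x. c * F x) h x = c^2 * transvectant 2 F F h x"
  using assms by (simp add: T2 sum_distrib_left power2_eq_square mult_ac)

lemma theta_cov:
  assumes "pf f"
  shows "theta (\<lambda>x. f (M *v x)) (transpose M *v v) = (\<lambda>x. det M ^ 2 * theta f v (M *v x))"
  unfolding theta_def ux2_transpose
  using assms by (simp add: cov_T2)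

lemma F6u_cov:
  assumes "pf f"
  shows "F6u (\<lambda>x. f (M *v x)) (transpose M *v v) x = det M ^ 6 * F6u f v (M *v x)"
proof -
  have "F6u (\<lambda>x. f (M *v x)) (transpose M *v v) x =
     1/3072 * transvectant 2 (\<lambda>x. det M ^ 2 * theta f v (M *v x)) (\<lambda>x. det M ^ 2 * theta f v (M *v x)) (\<lambda>x. ux2 v (M *v x)) x"
    unfolding F6u_def theta_cov[OF assms] ux2_transpose ..
  also have "\<dots> = 1/3072 * (det M ^ 2)^2 * transvectant 2 (\<lambda>x. theta f v (M *v x)) (\<lambda>x. theta f v (M *v x)) (\<lambda>x. ux2 v (M *v x)) x"
    using assms by (subst T2_scale) (auto intro: pf_comp)
  also have "\<dots> = 1/3072 * (det M ^ 2)^2 * (det M ^ 2 * transvectant 2 (theta f v) (theta f v) (ux2 v) (M *v x))"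
    using assms by (subst cov_T2) auto
  also have "\<dots> = det M ^ 6 * F6u f v (M *v x)"
    unfolding F6u_def by (simp add: power_mult_distrib flip: power_mult power_add)
  finally show ?thesis .
qed



abbreviation "S3 d \<equiv> {(i,j,k). (i::nat) + j + k = d}"

lemma S3_sub: "S3 d \<subseteq> {0..d} \<times> {0..d} \<times> {0..d}" by auto
lemma finite_S3[simp]: "finite (S3 d)" by (rule finite_subset[OF S3_sub]) auto

lemma S3_3: "S3 3 = {(3,0,0),(2,1,0),(2,0,1),(1,2,0),(1,1,1),(1,0,2),(0,3,0),(0,2,1),(0,1,2),(0,0,3)}"
proof (rule set_eqI, rule iffI)
  fix t assume "t \<in> S3 3"
  then obtain i j k where t: "t = (i,j,k)" "i + j + k = 3" by auto
  then have k: "k = 3 - i - j" by arith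
  have "i = 0 \<or> i = 1 \<or> i = 2 \<or> i = 3" using t by arith
  moreover have "j = 0 \<or> j = 1 \<or> j = 2 \<or> j = 3" using t by arith
  ultimately show "t \<in> {(3,0,0),(2,1,0),(2,0,1),(1,2,0),(1,1,1),(1,0,2),(0,3,0),(0,2,1),(0,1,2),(0,0,3)}"
    using t k by (elim disjE) simp_all
qed auto
lemma S3_1: "S3 1 = {(1,0,0),(0,1,0),(0,0,1)}"
proof (rule set_eqI, rule iffI)
  fix t assume "t \<in> S3 1"
  then obtain i j k where t: "t = (i,j,k)" "i + j + k = 1" by auto
  then have "(i=1 \<and> j=0 \<and> k=0) \<or> (i=0 \<and> j=1 \<and> k=0) \<or> (i=0 \<and> j=0 \<and> k=1)" by presburger
  then show "t \<in> {(1,0,0),(0,1,0),(0,0,1)}" using t by (elim disjE) simp_all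
qed auto

lemma S3_0: "S3 0 = {(0,0,0)}" by auto

definition cubic :: "(nat \<Rightarrow> nat \<Rightarrow> nat \<Rightarrow> complex) \<Rightarrow> complex^3 \<Rightarrow> complex" where
  "cubic c x = c 3 0 0 * x$1^3 + c 2 1 0 * x$1^2 * x$2 + c 2 0 1 * x$1^2 * x$3
   + c 1 2 0 * x$1 * x$2^2 + c 1 1 1 * x$1 * x$2 * x$3 + c 1 0 2 * x$1 * x$3^2
   + c 0 3 0 * x$2^3 + c 0 2 1 * x$2^2 * x$3 + c 0 1 2 * x$2 * x$3^2 + c 0 0 3 * x$3^3"

lemma tf3_cubic: "ternary_form 3 f \<Longrightarrow> \<exists>c. f = cubic c"
proof -
  assume "ternary_form 3 f"
  then obtain c where c: "\<forall>x. f x = (\<Sum>(i,j,k)\<in>S3 3. c i j k * x$1 ^ i * x$2 ^ j * x$3 ^ k)"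
    unfolding ternary_form_def by blast
  show ?thesis
    by (rule exI[of _ c]) (simp only: fun_eq_iff c S3_3, simp add: cubic_def algebra_simps)
qed



definition mon :: "nat \<times> nat \<times> nat \<Rightarrow> complex^3 \<Rightarrow> complex" where
  "mon p x = (case p of (i,j,k) \<Rightarrow> x$1 ^ i * x$2 ^ j * x$3 ^ k)"

lemma tf_iff: "ternary_form d f \<longleftrightarrow> (\<exists>C. \<forall>x. f x = (\<Sum>p\<in>S3 d. C p * mon p x))"
proof
  assume "ternary_form d f"
  then obtain c where c: "\<forall>x. f x = (\<Sum>(i,j,k)\<in>S3 d. c i j k * x$1 ^ i * x$2 ^ j * x$3 ^ k)"
    unfolding ternary_form_def by blast
  show "\<exists>C. \<forall>x. f x = (\<Sum>p\<in>S3 d. C p * mon p x)"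
    by (rule exI[of _ "\<lambda>(i,j,k). c i j k"]) (auto simp: c mon_def mult.assoc intro!: sum.cong)
next
  assume "\<exists>C. \<forall>x. f x = (\<Sum>p\<in>S3 d. C p * mon p x)"
  then obtain C where C: "\<forall>x. f x = (\<Sum>p\<in>S3 d. C p * mon p x)" by blast
  show "ternary_form d f"
    unfolding ternary_form_def
    by (rule exI[of _ "\<lambda>i j k. C (i,j,k)"]) (auto simp: C mon_def mult.assoc intro!: sum.cong)
qed

lemma tf_zero: "ternary_form d (\<lambda>x. 0)"
  unfolding tf_iff by (rule exI[of _ "\<lambda>_. 0"]) simp

lemma tf_add: "ternary_form d f \<Longrightarrow> ternary_form d g \<Longrightarrow> ternary_form d (\<lambda>x. f x + g x)"
  unfolding tf_iff
  apply (elim exE)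
  subgoal for C D by (rule exI[of _ "\<lambda>p. C p + D p"]) (simp add: sum.distrib algebra_simps)
  done

lemma tf_scale: "ternary_form d f \<Longrightarrow> ternary_form d (\<lambda>x. a * f x)"
  unfolding tf_iff
  apply (elim exE)
  subgoal for C by (rule exI[of _ "\<lambda>p. a * C p"]) (simp add: sum_distrib_left algebra_simps)
  done

lemma tf_sum: "finite K \<Longrightarrow> (\<And>k. k \<in> K \<Longrightarrow> ternary_form d (F k)) \<Longrightarrow> ternary_form d (\<lambda>x. \<Sum>k\<in>K. F k x)"
  by (induction K rule: finite_induct) (auto intro: tf_zero tf_add)

lemma tf_const: "ternary_form 0 (\<lambda>x. a)"
  unfolding tf_iff S3_0 by (rule exI[of _ "\<lambda>_. a"]) (simp add: mon_def)

lemma tf_linear: "ternary_form 1 (\<lambda>x. \<Sum>k\<in>UNIV. m$k * x$k)"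
  unfolding tf_iff S3_1
  by (rule exI[of _ "\<lambda>(i,j,k). if i = 1 then m$1 else if j = 1 then m$2 else m$3"]) (simp add: mon_def sum_3)

definition padd :: "nat \<times> nat \<times> nat \<Rightarrow> nat \<times> nat \<times> nat \<Rightarrow> nat \<times> nat \<times> nat" where
  "padd p q = (case p of (i,j,k) \<Rightarrow> case q of (i',j',k') \<Rightarrow> (i+i', j+j', k+k'))"

lemma mon_padd: "mon (padd p q) x = mon p x * mon q x"
  by (cases p; cases q) (simp add: mon_def padd_def power_add mult_ac)

lemma padd_S3: "p \<in> S3 a \<Longrightarrow> q \<in> S3 b \<Longrightarrow> padd p q \<in> S3 (a + b)"
  by (cases p; cases q) (auto simp: padd_def)

lemma tf_mult: "ternary_form a f \<Longrightarrow> ternary_form b g \<Longrightarrow> ternary_form (a + b) (\<lambda>x. f x * g x)"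
proof -
  assume "ternary_form a f" "ternary_form b g"
  then obtain C D where C: "\<forall>x. f x = (\<Sum>p\<in>S3 a. C p * mon p x)" and D: "\<forall>x. g x = (\<Sum>p\<in>S3 b. D p * mon p x)"
    unfolding tf_iff by blast
  define E where "E P = (\<Sum>pq\<in>{pq. pq \<in> S3 a \<times> S3 b \<and> (case pq of (p,q) \<Rightarrow> padd p q) = P}. case pq of (p,q) \<Rightarrow> C p * D q)" for P
  have "f x * g x = (\<Sum>P\<in>S3 (a+b). E P * mon P x)" for x
  proof -
    have "f x * g x = (\<Sum>p\<in>S3 a. C p * mon p x) * (\<Sum>q\<in>S3 b. D q * mon q x)" using C D by simp
    also have "\<dots> = (\<Sum>pq\<in>S3 a \<times> S3 b. case pq of (p,q) \<Rightarrow> C p * D q * mon (padd p q) x)"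
      unfolding sum_product sum.cartesian_product mon_padd by (simp add: mult_ac)
    also have "\<dots> = (\<Sum>P\<in>S3 (a+b). \<Sum>pq\<in>{pq. pq \<in> S3 a \<times> S3 b \<and> (case pq of (p,q) \<Rightarrow> padd p q) = P}. case pq of (p,q) \<Rightarrow> C p * D q * mon (padd p q) x)"
      by (rule sum.group[symmetric]) (auto simp: padd_def)
    also have "\<dots> = (\<Sum>P\<in>S3 (a+b). E P * mon P x)"
      unfolding E_def sum_distrib_right
      by (intro sum.cong refl) auto
    finally show ?thesis .
  qed
  then show ?thesis unfolding tf_iff by blast
qed

lemma tf_pow: "ternary_form d f \<Longrightarrow> ternary_form (d * n) (\<lambda>x. f x ^ n)"
proof (induction n)
  case 0 then show ?case using tf_const[of 1] by simp
next
  case (Suc n)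
  have "ternary_form (d + d * n) (\<lambda>x. f x * f x ^ n)" using Suc by (intro tf_mult) auto
  then show ?case by (simp add: algebra_simps)
qed

lemma tf_comp: "ternary_form 3 f \<Longrightarrow> ternary_form 3 (\<lambda>x. f (M *v x))"
proof -
  assume "ternary_form 3 f"
  then obtain C where C: "\<forall>x. f x = (\<Sum>p\<in>S3 3. C p * mon p x)" unfolding tf_iff by blast
  have lin: "ternary_form 1 (\<lambda>x. (M *v x) $ r)" for r
    unfolding mv_nth using tf_linear[of "M$r"] by simp
  have "ternary_form 3 (\<lambda>x. C p * mon p (M *v x))" if "p \<in> S3 3" for p
  proof -
    obtain i j k where p: "p = (i,j,k)" "i + j + k = 3" using \<open>p \<in> S3 3\<close> by auto
    have "ternary_form (1*i + 1*j + 1*k) (\<lambda>x. (M *v x)$1 ^ i * (M *v x)$2 ^ j * (M *v x)$3 ^ k)"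
      by (intro tf_mult tf_pow lin)
    then have "ternary_form 3 (\<lambda>x. mon p (M *v x))" using p by (simp add: mon_def)
    then show ?thesis by (rule tf_scale)
  qed
  then have "ternary_form 3 (\<lambda>x. \<Sum>p\<in>S3 3. C p * mon p (M *v x))" by (intro tf_sum) auto
  then show ?thesis using C by simp
qed



lemma pf_uminus[simp,intro]: "pf f \<Longrightarrow> pf (\<lambda>x. - f x)"
proof -
  assume "pf f" then have "pf (\<lambda>x. (-1) * f x)" by (intro pf.intros)
  then show ?thesis by simp
qed

lemma pd_uminus[simp]: "pf f \<Longrightarrow> pd i (\<lambda>x. - f x) = (\<lambda>x. - pd i f x)"
  by (rule ext) (simp add: pd_def deriv_minus pf_diff)

definition alt6 :: "(3 \<Rightarrow> 3 \<Rightarrow> 3 \<Rightarrow> complex) \<Rightarrow> complex" where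
  "alt6 h = h 1 2 3 - h 1 3 2 - h 2 1 3 + h 2 3 1 + h 3 1 2 - h 3 2 1"

lemma T2_expl:
  assumes "pf f" "pf g" "pf h"
  shows "transvectant 2 f g h x = alt6 (\<lambda>a1 a2 a3. alt6 (\<lambda>b1 b2 b3.
      pd b1 (pd a1 f) x * pd b2 (pd a2 g) x * pd b3 (pd a3 h) x))"
proof -
  have "transvectant 2 f g h x = (\<Sum>\<sigma>\<in>perms3. of_int (sign \<sigma>) * (\<Sum>\<tau>\<in>perms3. of_int (sign \<tau>) *
     (pd (\<tau> 1) (pd (\<sigma> 1) f) x * pd (\<tau> 2) (pd (\<sigma> 2) g) x * pd (\<tau> 3) (pd (\<sigma> 3) h) x)))"
    unfolding T2[OF assms] by (simp add: sum_distrib_left mult_ac)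
  also have "\<dots> = (\<Sum>\<sigma>\<in>perms3. of_int (sign \<sigma>) * alt6 (\<lambda>b1 b2 b3.
      pd b1 (pd (\<sigma> 1) f) x * pd b2 (pd (\<sigma> 2) g) x * pd b3 (pd (\<sigma> 3) h) x))"
  proof (intro sum.cong refl arg_cong2[where f="(*)"])
    fix \<sigma> :: "3 \<Rightarrow> 3"
    show "(\<Sum>\<tau>\<in>perms3. of_int (sign \<tau>) *
     (pd (\<tau> 1) (pd (\<sigma> 1) f) x * pd (\<tau> 2) (pd (\<sigma> 2) g) x * pd (\<tau> 3) (pd (\<sigma> 3) h) x)) = alt6 (\<lambda>b1 b2 b3.
      pd b1 (pd (\<sigma> 1) f) x * pd b2 (pd (\<sigma> 2) g) x * pd b3 (pd (\<sigma> 3) h) x)"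
      by (subst perms3_sum[where h="\<lambda>b1 b2 b3. pd b1 (pd (\<sigma> 1) f) x * pd b2 (pd (\<sigma> 2) g) x * pd b3 (pd (\<sigma> 3) h) x"]) (simp add: alt6_def)
  qed
  also have "\<dots> = alt6 (\<lambda>a1 a2 a3. alt6 (\<lambda>b1 b2 b3.
      pd b1 (pd a1 f) x * pd b2 (pd a2 g) x * pd b3 (pd a3 h) x))"
    by (subst perms3_sum[where h="\<lambda>a1 a2 a3. alt6 (\<lambda>b1 b2 b3.
      pd b1 (pd a1 f) x * pd b2 (pd a2 g) x * pd b3 (pd a3 h) x)"]) (simp add: alt6_def)
  finally show ?thesis .
qed

lemma lin_expand: "lin u = (\<lambda>x. u$1 * x$1 + u$2 * x$2 + u$3 * x$3)"
  by (rule ext) (simp add: lin_def sum_3)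

lemma ux2_expand: "ux2 u = (\<lambda>x. (u$1 * x$1 + u$2 * x$2 + u$3 * x$3)^2)"
  by (simp add: ux2_def lin_expand)

lemma theta_xyy: "theta (\<lambda>x. x$1 * x$2^2) v = (\<lambda>x. -4 * (v$3)^2 * (x$2)^2)"
  unfolding theta_def
  apply (rule ext)
  apply (subst T2_expl)
  apply (auto simp: ux2_expand)[3]
  apply (simp add: alt6_def ux2_expand)
  apply algebra
  done

lemma F6u_xyy: "F6u (\<lambda>x. x$1 * x$2^2) v y = 0"
  unfolding F6u_def theta_xyy
  apply (subst T2_expl)
  apply (auto simp: ux2_expand)[3]
  apply (simp add: alt6_def ux2_expand)
  done



definition e1 :: "complex^3" where "e1 = (\<chi> i. if i = 1 then 1 else 0)"

lemma cubic_fun: "cubic c = (\<lambda>x. c 3 0 0 * x$1^3 + c 2 1 0 * x$1^2 * x$2 + c 2 0 1 * x$1^2 * x$3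
   + c 1 2 0 * x$1 * x$2^2 + c 1 1 1 * x$1 * x$2 * x$3 + c 1 0 2 * x$1 * x$3^2
   + c 0 3 0 * x$2^3 + c 0 2 1 * x$2^2 * x$3 + c 0 1 2 * x$2 * x$3^2 + c 0 0 3 * x$3^3)"
  by (rule ext) (simp add: cubic_def)

lemma pf_cubic[simp,intro]: "pf (cubic c)"
  unfolding cubic_fun by simp

lemma ux2_e1: "ux2 e1 = (\<lambda>x. (x$1)^2)"
  by (simp add: ux2_expand e1_def)

lemma theta_cubic_e1: "theta (cubic c) e1 = (\<lambda>x. -4*x$3^2*c 0 1 2^2 + 12*x$3^2*c 0 0 3*c 0 2 1 - 4*x$2*x$3*c 0 1 2*c 0 2 1
  + 36*x$2*x$3*c 0 0 3*c 0 3 0 - 4*x$2^2*c 0 2 1^2 + 12*x$2^2*c 0 1 2*c 0 3 0 + 4*x$1*x$3*c 0 2 1*c 1 0 2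
  - 4*x$1*x$3*c 0 1 2*c 1 1 1 + 12*x$1*x$3*c 0 0 3*c 1 2 0 + 12*x$1*x$2*c 0 3 0*c 1 0 2 - 4*x$1*x$2*c 0 2 1*c 1 1 1
  + 4*x$1*x$2*c 0 1 2*c 1 2 0 - x$1^2*c 1 1 1^2 + 4*x$1^2*c 1 0 2*c 1 2 0)"
  unfolding theta_def
  apply (rule ext)
  apply (subst T2_expl)
  apply (auto simp: ux2_e1)[3]
  apply (simp add: alt6_def ux2_e1 cubic_fun)
  apply algebra
  done

lemma F6u_cubic_e1: "F6u (cubic c) e1 y = (1/16) * (c 0 2 1^2 * c 0 1 2^2 - 4 * c 0 3 0 * c 0 1 2^3
   - 4 * c 0 2 1^3 * c 0 0 3 - 27 * c 0 3 0^2 * c 0 0 3^2 + 18 * c 0 3 0 * c 0 2 1 * c 0 1 2 * c 0 0 3)"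
  unfolding F6u_def theta_cubic_e1
  apply (subst T2_expl)
  apply (auto simp: ux2_e1)[3]
  apply (simp add: alt6_def ux2_e1)
  apply algebra
  done



lemma binary_core:
  fixes p0 p1 p2 r0 r1 r2 r3 :: complex
  assumes E6: "4*p0^3 + 27*r0^2 = 0"
    and E5: "12*p0^2*p1 + 54*r0*r1 = 0"
    and E4: "12*p0^2*p2 + 12*p0*p1^2 + 27*r1^2 + 54*r0*r2 = 0"
    and E3: "4*p1^3 + 24*p0*p1*p2 + 54*r0*r3 + 54*r1*r2 = 0"
    and E2: "12*p0*p2^2 + 12*p1^2*p2 + 27*r2^2 + 54*r1*r3 = 0"
    and p0: "p0 \<noteq> 0"
  shows "\<exists>m0 m1. p0 = -3*m0^2 \<and> p1 = -6*m0*m1 \<and> p2 = -3*m1^2 \<and> r0 = 2*m0^3 \<and> r1 = 6*m0^2*m1 \<and> r2 = 6*m0*m1^2 \<and> r3 = 2*m1^3"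
proof -
  define w0 where "w0 = csqrt (-p0/3)"
  have s2: "w0^2 = -p0/3" unfolding w0_def by simp
  have "(r0 - 2*w0^3) * (r0 + 2*w0^3) = 0"
  proof -
    have "w0^6 = (w0^2)^3" by (simp flip: power_mult)
    then have "w0^6 = - (p0^3) / 27" using s2 by (simp add: power_divide)
    then have w6: "w0^6 = - (p0^3) / 27" .
    have "(r0 - 2*w0^3)*(r0 + 2*w0^3) = r0^2 - 4*w0^6" by algebra
    also have "\<dots> = (4*p0^3 + 27*r0^2)/27" using w6 by (simp add: field_simps)
    also have "\<dots> = 0" using E6 by simp
    finally show ?thesis .
  qed
  then obtain a where a2: "a^2 = -p0/3" and r0: "r0 = 2*a^3"
  proof (cases "r0 = 2*w0^3")
    case True then show ?thesis using that s2 by blast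
  next
    case False
    then have "r0 + 2*w0^3 = 0" using \<open>(r0 - 2*w0^3) * (r0 + 2*w0^3) = 0\<close> by simp
    then have "r0 = 2*(-w0)^3" by (simp add: eq_neg_iff_add_eq_0)
    then show ?thesis using that[of "-w0"] s2 by simp
  qed
  have p0a: "p0 = -3*a^2" using a2 by simp
  have a0: "a \<noteq> 0" using p0 p0a by auto
  define b where "b = -p1/(6*a)"
  have p1b: "p1 = -6*a*b" using a0 unfolding b_def by simp
  have "a^3 * (r1 - 6*a^2*b) = 0"
  proof -
    have "108 * (a^3 * (r1 - 6*a^2*b)) = 12*p0^2*p1 + 54*r0*r1" unfolding p0a p1b r0 by algebra
    then show ?thesis using E5 by simp
  qed
  then have r1: "r1 = 6*a^2*b" using a0 by simp
  define e where "e = p2 + 3*b^2"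
  have p2e: "p2 = -3*b^2 + e" unfolding e_def by simp
  have "a^3 * (r2 - (6*a*b^2 - a*e)) = 0"
  proof -
    have "108 * (a^3 * (r2 - (6*a*b^2 - a*e))) = 12*p0^2*p2 + 12*p0*p1^2 + 27*r1^2 + 54*r0*r2" unfolding p0a p1b r0 r1 p2e by algebra
    then show ?thesis using E4 by simp
  qed
  then have r2: "r2 = 6*a*b^2 - a*e" using a0 by simp
  define d where "d = r3 - 2*b^3"
  have r3d: "r3 = 2*b^3 + d" unfolding d_def by simp
  have "a^3 * (b*e + d) = 0"
  proof -
    have "108 * (a^3 * (b*e + d)) = 4*p1^3 + 24*p0*p1*p2 + 54*r0*r3 + 54*r1*r2" unfolding p0a p1b r0 r1 p2e r2 r3d by algebra
    then show ?thesis using E3 by simp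
  qed
  then have "b*e + d = 0" using a0 by simp
  then have d: "d = -(b*e)" by (simp add: eq_neg_iff_add_eq_0 add.commute)
  have "a^2 * e^2 = 0"
  proof -
    have "-9 * (a^2 * e^2) = 12*p0*p2^2 + 12*p1^2*p2 + 27*r2^2 + 54*r1*r3" unfolding p0a p1b r0 r1 p2e r2 r3d d by algebra
    then show ?thesis using E2 by simp
  qed
  then have e: "e = 0" using a0 by simp
  show ?thesis
    by (rule exI[of _ a], rule exI[of _ b]) (simp add: p0a p1b r0 r1 r2 r3d p2e d e)
qed

lemma binary_coeffs:
  fixes p0 p1 p2 r0 r1 r2 r3 :: complex
  assumes E6: "4*p0^3 + 27*r0^2 = 0"
    and E5: "12*p0^2*p1 + 54*r0*r1 = 0"
    and E4: "12*p0^2*p2 + 12*p0*p1^2 + 27*r1^2 + 54*r0*r2 = 0"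
    and E3: "4*p1^3 + 24*p0*p1*p2 + 54*r0*r3 + 54*r1*r2 = 0"
    and E2: "12*p0*p2^2 + 12*p1^2*p2 + 27*r2^2 + 54*r1*r3 = 0"
    and E1: "12*p1*p2^2 + 54*r2*r3 = 0"
    and E0: "4*p2^3 + 27*r3^2 = 0"
  shows "\<exists>m0 m1. p0 = -3*m0^2 \<and> p1 = -6*m0*m1 \<and> p2 = -3*m1^2 \<and> r0 = 2*m0^3 \<and> r1 = 6*m0^2*m1 \<and> r2 = 6*m0*m1^2 \<and> r3 = 2*m1^3"
proof (cases "p0 = 0")
  case False then show ?thesis using binary_core[OF E6 E5 E4 E3 E2] by blast
next
  case p0: True
  then have r0: "r0 = 0" using E6 by simp
  show ?thesis
  proof (cases "p2 = 0")
    case False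
    have "\<exists>m0 m1. p2 = -3*m0^2 \<and> p1 = -6*m0*m1 \<and> p0 = -3*m1^2 \<and> r3 = 2*m0^3 \<and> r2 = 6*m0^2*m1 \<and> r1 = 6*m0*m1^2 \<and> r0 = 2*m1^3"
      by (rule binary_core) (use E0 E1 E2 E3 E4 False in \<open>auto simp: algebra_simps\<close>)
    then obtain m0 m1 where "p2 = -3*m0^2 \<and> p1 = -6*m0*m1 \<and> p0 = -3*m1^2 \<and> r3 = 2*m0^3 \<and> r2 = 6*m0^2*m1 \<and> r1 = 6*m0*m1^2 \<and> r0 = 2*m1^3" by blast
    then show ?thesis by (intro exI[of _ m1] exI[of _ m0]) (auto simp: algebra_simps)
  next
    case p2: True
    then have r3: "r3 = 0" using E0 by simp
    have r1: "r1 = 0" using E4 p0 r0 by simp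
    have r2: "r2 = 0" using E2 p2 r3 by simp
    have p1: "p1 = 0" using E3 p0 r0 r1 by simp
    show ?thesis by (rule exI[of _ 0], rule exI[of _ 0]) (simp add: p0 p1 p2 r0 r1 r2 r3)
  qed
qed

lemma binary:
  fixes p0 p1 p2 r0 r1 r2 r3 :: complex
  assumes "\<forall>t. 4*(p0*t^2 + p1*t + p2)^3 + 27*(r0*t^3 + r1*t^2 + r2*t + r3)^2 = 0"
  shows "\<exists>m0 m1. p0 = -3*m0^2 \<and> p1 = -6*m0*m1 \<and> p2 = -3*m1^2 \<and> r0 = 2*m0^3 \<and> r1 = 6*m0^2*m1 \<and> r2 = 6*m0*m1^2 \<and> r3 = 2*m1^3"
proof -
  define q where "q = [: 4*p2^3 + 27*r3^2, 12*p1*p2^2 + 54*r2*r3, 12*p0*p2^2 + 12*p1^2*p2 + 27*r2^2 + 54*r1*r3,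
     4*p1^3 + 24*p0*p1*p2 + 54*r0*r3 + 54*r1*r2, 12*p0^2*p2 + 12*p0*p1^2 + 27*r1^2 + 54*r0*r2,
     12*p0^2*p1 + 54*r0*r1, 4*p0^3 + 27*r0^2 :]"
  have "poly q t = 4*(p0*t^2 + p1*t + p2)^3 + 27*(r0*t^3 + r1*t^2 + r2*t + r3)^2" for t
    unfolding q_def by simp algebra
  then have "\<forall>t. poly q t = 0" using assms by simp
  then have "q = 0" using poly_all_0_iff_0 by blast
  then show ?thesis unfolding q_def by (intro binary_coeffs) (simp_all add: pCons_eq_0_iff)
qed



lemma F6u_zero_comp:
  assumes "pf f" "\<forall>u x. F6u f u x = 0" "det M \<noteq> 0"
  shows "\<forall>u x. F6u (\<lambda>x. f (M *v x)) u x = 0"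
proof (intro allI)
  fix u x
  have inv: "invertible (transpose M)" using assms(3) by (simp add: invertible_det_nz det_transpose)
  then obtain N where N: "transpose M ** N = mat 1" unfolding invertible_def by blast
  define v where "v = N *v u"
  have "transpose M *v v = u"
    unfolding v_def matrix_vector_mul_assoc N by simp
  then have "F6u (\<lambda>x. f (M *v x)) u x = det M ^ 6 * F6u f v (M *v x)"
    using F6u_cov[OF assms(1)] by metis
  then show "F6u (\<lambda>x. f (M *v x)) u x = 0" using assms(2) by simp
qed

definition mk3 :: "complex \<Rightarrow> complex \<Rightarrow> complex \<Rightarrow> complex^3" where
  "mk3 a b c = (\<chi> i. if i = 1 then a else if i = 2 then b else c)"

lemma mk3_nth[simp]: "mk3 a b c $ 1 = a" "mk3 a b c $ 2 = b" "mk3 a b c $ 3 = c"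
  by (simp_all add: mk3_def)

lemma easy_dir:
  assumes "\<forall>x. f x = lin a x * (lin b x)^2"
  shows "F6u f u x = 0"
proof -
  define B :: "complex^3^3" where "B = (\<chi> i. if i = 1 then a else if i = 2 then b else u)"
  have B1: "(B *v y)$1 = lin a y" "(B *v y)$2 = lin b y" for y
    by (simp_all add: B_def mv_nth lin_def)
  have f: "f = (\<lambda>y. (\<lambda>z. z$1 * z$2^2) (B *v y))"
    using assms by (simp add: fun_eq_iff B1)
  have u: "transpose B *v mk3 0 0 1 = u"
    by (simp add: vec_eq_iff mv_nth transpose_def B_def sum_3)
  have "F6u f u x = F6u (\<lambda>y. (\<lambda>z. z$1 * z$2^2) (B *v y)) (transpose B *v mk3 0 0 1) x"
    using f u by simp
  also have "\<dots> = det B ^ 6 * F6u (\<lambda>z. z$1 * z$2^2) (mk3 0 0 1) (B *v x)"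
    by (rule F6u_cov) simp
  also have "\<dots> = 0" by (simp add: F6u_xyy)
  finally show ?thesis .
qed

lemma cubic_zero: "cubic c 0 = 0" by (simp add: cubic_def)

lemma exists_A:
  assumes "x0 \<noteq> 0"
  shows "\<exists>A :: complex^3^3. det A \<noteq> 0 \<and> A *v mk3 0 0 1 = x0"
proof (cases "x0$3 = 0")
  case False
  define A :: "complex^3^3" where "A = (\<chi> i j. if j = 3 then x0$i else if i = j then 1 else 0)"
  have "det A = x0$3" by (simp add: A_def det_3)
  moreover have "A *v mk3 0 0 1 = x0" by (simp add: A_def vec_eq_iff mv_nth sum_3)
  ultimately show ?thesis using False by (intro exI[of _ A]) auto
next
  case x3: True
  show ?thesis
  proof (cases "x0$1 = 0")
    case x1: True
    then have x2: "x0$2 \<noteq> 0" using assms x3 by (metis (mono_tags) exhaust_3 vec_eq_iff zero_index)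
    define A :: "complex^3^3" where "A = (\<chi> i j. if j = 3 then x0$i else if i = 1 \<and> j = 1 then 1 else if i = 3 \<and> j = 2 then 1 else 0)"
    have "det A = - x0$2" using x1 x3 by (simp add: A_def det_3)
    moreover have "A *v mk3 0 0 1 = x0" by (simp add: A_def vec_eq_iff mv_nth sum_3)
    ultimately show ?thesis using x2 by (intro exI[of _ A]) auto
  next
    case x1: False
    define A :: "complex^3^3" where "A = (\<chi> i j. if j = 3 then x0$i else if i = 2 \<and> j = 1 then 1 else if i = 3 \<and> j = 2 then 1 else 0)"
    have "det A = x0$1" using x3 by (simp add: A_def det_3)
    moreover have "A *v mk3 0 0 1 = x0" by (simp add: A_def vec_eq_iff mv_nth sum_3)
    ultimately show ?thesis using x1 by (intro exI[of _ A]) auto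
  qed
qed



lemma cubic_mk3: "cubic c (mk3 x y z) = c 3 0 0 * x^3 + c 2 1 0 * x^2 * y + c 2 0 1 * x^2 * z
   + c 1 2 0 * x * y^2 + c 1 1 1 * x * y * z + c 1 0 2 * x * z^2
   + c 0 3 0 * y^3 + c 0 2 1 * y^2 * z + c 0 1 2 * y * z^2 + c 0 0 3 * z^3"
  by (simp add: cubic_def)

lemma vec_mk3: "x = mk3 (x$1) (x$2) (x$3)"
  by (simp add: vec_eq_iff mk3_def) (metis exhaust_3)

lemma tschirnhaus:
  fixes c1 :: "nat \<Rightarrow> nat \<Rightarrow> nat \<Rightarrow> complex" and k la mu :: complex
  assumes k: "k = c1 0 0 3" and la: "c1 1 0 2 = -3*k*la" and mu: "c1 0 1 2 = -3*k*mu"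
  shows "cubic c1 (mk3 x y (z + la*x + mu*y)) = k*z^3
     + z*((c1 2 0 1 - 3*k*la^2)*x^2 + (c1 1 1 1 - 6*k*la*mu)*x*y + (c1 0 2 1 - 3*k*mu^2)*y^2)
     + ((c1 3 0 0 + la*c1 2 0 1 - 2*k*la^3)*x^3 + (c1 2 1 0 + la*c1 1 1 1 + mu*c1 2 0 1 - 6*k*la^2*mu)*x^2*y
        + (c1 1 2 0 + la*c1 0 2 1 + mu*c1 1 1 1 - 6*k*la*mu^2)*x*y^2 + (c1 0 3 0 + mu*c1 0 2 1 - 2*k*mu^3)*y^3)"
  unfolding cubic_mk3 la mu k[symmetric] by algebra



lemma lin_zero: "lin 0 x = 0" by (simp add: lin_def)

lemma hard_dir:
  assumes tf: "ternary_form 3 f" and H: "\<forall>u x. F6u f u x = 0"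
  shows "\<exists>a b. \<forall>x. f x = lin a x * (lin b x)^2"
proof (cases "\<forall>x. f x = 0")
  case True then show ?thesis by (intro exI[of _ 0]) (simp add: lin_zero)
next
  case False
  then obtain x0 where fx0: "f x0 \<noteq> 0" by blast
  obtain c0 where fc: "f = cubic c0" using tf3_cubic[OF tf] by blast
  have pff: "pf f" unfolding fc by simp
  have "x0 \<noteq> 0" using fx0 fc cubic_zero by auto
  then obtain A where detA: "det A \<noteq> 0" and Ae3: "A *v mk3 0 0 1 = x0" using exists_A by blast
  define f1 where "f1 = (\<lambda>x. f (A *v x))"
  have tf1: "ternary_form 3 f1" unfolding f1_def using tf by (rule tf_comp)
  obtain c1 where f1c: "f1 = cubic c1" using tf3_cubic[OF tf1] by blast
  have H1: "\<forall>u x. F6u f1 u x = 0" unfolding f1_def using F6u_zero_comp[OF pff H detA] .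
  define k where "k = c1 0 0 3"
  have "f1 (mk3 0 0 1) = k" unfolding f1c k_def by (simp add: cubic_mk3)
  moreover have "f1 (mk3 0 0 1) = f x0" unfolding f1_def Ae3 ..
  ultimately have k0: "k \<noteq> 0" using fx0 by simp
  define la where "la = - c1 1 0 2 / (3*k)"
  define mu where "mu = - c1 0 1 2 / (3*k)"
  have la: "c1 1 0 2 = -3*k*la" unfolding la_def using k0 by simp
  have mu: "c1 0 1 2 = -3*k*mu" unfolding mu_def using k0 by simp
  define q0 where "q0 = c1 2 0 1 - 3*k*la^2"
  define q1 where "q1 = c1 1 1 1 - 6*k*la*mu"
  define q2 where "q2 = c1 0 2 1 - 3*k*mu^2"
  define s0 where "s0 = c1 3 0 0 + la*c1 2 0 1 - 2*k*la^3"
  define s1 where "s1 = c1 2 1 0 + la*c1 1 1 1 + mu*c1 2 0 1 - 6*k*la^2*mu"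
  define s2 where "s2 = c1 1 2 0 + la*c1 0 2 1 + mu*c1 1 1 1 - 6*k*la*mu^2"
  define s3 where "s3 = c1 0 3 0 + mu*c1 0 2 1 - 2*k*mu^3"
  have tsch: "cubic c1 (mk3 x y (z + la*x + mu*y)) = k*z^3 + z*(q0*x^2 + q1*x*y + q2*y^2)
      + (s0*x^3 + s1*x^2*y + s2*x*y^2 + s3*y^3)" for x y z
    unfolding q0_def q1_def q2_def s0_def s1_def s2_def s3_def
    by (rule tschirnhaus[OF k_def la mu])
  define T :: "complex^3^3" where "T = (\<chi> i j. if i = j then 1 else if i = 3 \<and> j = 1 then la else if i = 3 \<and> j = 2 then mu else 0)"
  have Tx: "T *v x = mk3 (x$1) (x$2) (x$3 + la*x$1 + mu*x$2)" for x
    by (simp add: T_def vec_eq_iff forall_3 mv_nth sum_3 algebra_simps)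
  have detT: "det T = 1" by (simp add: T_def det_3)
  define f2 where "f2 = (\<lambda>x. f1 (T *v x))"
  have pf1: "pf f1" unfolding f1c by simp
  have pf2: "pf f2" unfolding f2_def using pf1 by (rule pf_comp)
  have tf2: "ternary_form 3 f2" unfolding f2_def using tf1 by (rule tf_comp)
  have H2: "\<forall>u x. F6u f2 u x = 0" unfolding f2_def using F6u_zero_comp[OF pf1 H1] detT by simp
  have f2v: "f2 x = k*(x$3)^3 + x$3*(q0*(x$1)^2 + q1*x$1*x$2 + q2*(x$2)^2)
      + (s0*(x$1)^3 + s1*(x$1)^2*x$2 + s2*x$1*(x$2)^2 + s3*(x$2)^3)" for x
    unfolding f2_def Tx f1c tsch ..
  have keyt: "4*(q0*t^2 + q1*t + q2)^3 + 27*k*(s0*t^3 + s1*t^2 + s2*t + s3)^2 = 0" for t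
  proof -
    define R :: "complex^3^3" where "R = (\<chi> i j. if i = j then 1 else if i = 1 \<and> j = 2 then t else 0)"
    have Rx: "R *v x = mk3 (x$1 + t*x$2) (x$2) (x$3)" for x
      by (simp add: R_def vec_eq_iff forall_3 mv_nth sum_3 algebra_simps)
    have detR: "det R = 1" by (simp add: R_def det_3)
    define g where "g = (\<lambda>x. f2 (R *v x))"
    have tfg: "ternary_form 3 g" unfolding g_def using tf2 by (rule tf_comp)
    obtain cg where gc: "g = cubic cg" using tf3_cubic[OF tfg] by blast
    have Hg: "\<forall>u x. F6u g u x = 0" unfolding g_def using F6u_zero_comp[OF pf2 H2] detR by simp
    define Q where "Q = q0*t^2 + q1*t + q2"
    define C where "C = s0*t^3 + s1*t^2 + s2*t + s3"
    have gv: "g (mk3 0 y z) = k*z^3 + z*y^2*Q + y^3*C" for y z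
      unfolding g_def Rx f2v Q_def C_def by (simp add: algebra_simps power2_eq_square power3_eq_cube)
    have gcv: "g (mk3 0 y z) = cg 0 3 0 * y^3 + cg 0 2 1 * y^2 * z + cg 0 1 2 * y * z^2 + cg 0 0 3 * z^3" for y z
      unfolding gc by (simp add: cubic_mk3)
    have v1: "cg 0 3 0 = C" using gv[of 1 0] gcv[of 1 0] by simp
    have v2: "cg 0 0 3 = k" using gv[of 0 1] gcv[of 0 1] by simp
    have v3: "cg 0 3 0 + cg 0 2 1 + cg 0 1 2 + cg 0 0 3 = k + Q + C" using gv[of 1 1] gcv[of 1 1] by simp
    have v4: "cg 0 3 0 - cg 0 2 1 + cg 0 1 2 - cg 0 0 3 = -k - Q + C" using gv[of 1 "-1"] gcv[of 1 "-1"] by simp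
    have "(cg 0 3 0 + cg 0 2 1 + cg 0 1 2 + cg 0 0 3) + (cg 0 3 0 - cg 0 2 1 + cg 0 1 2 - cg 0 0 3) = (k + Q + C) + (-k - Q + C)"
      using v3 v4 by simp
    then have "2 * cg 0 3 0 + 2 * cg 0 1 2 = 2 * C" by (simp add: algebra_simps)
    then have v5: "cg 0 1 2 = 0" using v1 by simp
    have v6: "cg 0 2 1 = Q" using v3 unfolding v1 v2 v5 by (simp add: algebra_simps)
    have "F6u g e1 0 = 0" using Hg by simp
    then have "(1/16) * (cg 0 2 1^2 * cg 0 1 2^2 - 4 * cg 0 3 0 * cg 0 1 2^3
       - 4 * cg 0 2 1^3 * cg 0 0 3 - 27 * cg 0 3 0^2 * cg 0 0 3^2 + 18 * cg 0 3 0 * cg 0 2 1 * cg 0 1 2 * cg 0 0 3) = 0"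
      unfolding gc F6u_cubic_e1 .
    then have h: "1/16 * (Q^2 * 0^2 - 4 * C * 0^3 - 4 * Q^3 * k - 27 * C^2 * k^2 + 18 * C * Q * 0 * k) = 0"
      unfolding v1 v2 v5 v6 .
    have "k * (4*Q^3 + 27*k*C^2) = -16 * (1/16 * (Q^2 * 0^2 - 4 * C * 0^3 - 4 * Q^3 * k - 27 * C^2 * k^2 + 18 * C * Q * 0 * k))"
      by (simp add: algebra_simps power2_eq_square)
    from this h have "k * (4*Q^3 + 27*k*C^2) = 0" by (metis mult_zero_right)
    then show ?thesis using k0 unfolding Q_def C_def by simp
  qed
  have "\<forall>t. 4*((q0/k)*t^2 + (q1/k)*t + q2/k)^3 + 27*((s0/k)*t^3 + (s1/k)*t^2 + (s2/k)*t + s3/k)^2 = 0"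
  proof
    fix t
    have "4*((q0/k)*t^2 + (q1/k)*t + q2/k)^3 + 27*((s0/k)*t^3 + (s1/k)*t^2 + (s2/k)*t + s3/k)^2
       = (4*(q0*t^2 + q1*t + q2)^3 + 27*k*(s0*t^3 + s1*t^2 + s2*t + s3)^2) / k^3"
    proof -
      have e1: "(q0/k)*t^2 + (q1/k)*t + q2/k = (q0*t^2 + q1*t + q2)/k" by (simp add: add_divide_distrib)
      have e2: "(s0/k)*t^3 + (s1/k)*t^2 + (s2/k)*t + s3/k = (s0*t^3 + s1*t^2 + s2*t + s3)/k" by (simp add: add_divide_distrib)
      show ?thesis unfolding e1 e2 using k0 by (simp add: power_divide field_simps power2_eq_square power3_eq_cube)
    qed
    then show "4*((q0/k)*t^2 + (q1/k)*t + q2/k)^3 + 27*((s0/k)*t^3 + (s1/k)*t^2 + (s2/k)*t + s3/k)^2 = 0"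
      using keyt[of t] by simp
  qed
  then obtain m0 m1 where m: "q0/k = -3*m0^2" "q1/k = -6*m0*m1" "q2/k = -3*m1^2" "s0/k = 2*m0^3"
     "s1/k = 6*m0^2*m1" "s2/k = 6*m0*m1^2" "s3/k = 2*m1^3"
    using binary by blast
  have qs: "q0 = -3*k*m0^2" "q1 = -6*k*m0*m1" "q2 = -3*k*m1^2" "s0 = 2*k*m0^3"
     "s1 = 6*k*m0^2*m1" "s2 = 6*k*m0*m1^2" "s3 = 2*k*m1^3"
    using m k0 by (simp_all add: field_simps)
  have f2fact: "f2 x = (k*(x$3 + 2*(m0*x$1 + m1*x$2))) * (x$3 - (m0*x$1 + m1*x$2))^2" for x
    unfolding f2v qs by algebra
  have "det (A ** T) \<noteq> 0" using detA detT by (simp add: det_mul)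
  then obtain N where N: "(A ** T) ** N = mat 1" unfolding invertible_det_nz[symmetric] invertible_def by blast
  have fN: "f x = f2 (N *v x)" for x
  proof -
    have "f2 (N *v x) = f (((A ** T) ** N) *v x)" unfolding f2_def f1_def by (simp add: matrix_vector_mul_assoc matrix_mul_assoc)
    then show ?thesis unfolding N by simp
  qed
  define a where "a = transpose N *v mk3 (2*k*m0) (2*k*m1) k"
  define b where "b = transpose N *v mk3 (-m0) (-m1) 1"
  have la_: "lin a x = k*((N *v x)$3 + 2*(m0*(N *v x)$1 + m1*(N *v x)$2))" for x
    unfolding a_def lin_transpose by (simp add: lin_expand algebra_simps)
  have lb_: "lin b x = (N *v x)$3 - (m0*(N *v x)$1 + m1*(N *v x)$2)" for x
    unfolding b_def lin_transpose by (simp add: lin_expand algebra_simps)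
  show ?thesis
    by (rule exI[of _ a], rule exI[of _ b]) (simp add: fN f2fact la_ lb_)
qed


theorem lemma7p2:
  fixes f :: "complex^3 \<Rightarrow> complex"
  assumes "ternary_form 3 f"
  shows "(\<forall>u x. F6u f u x = 0) \<longleftrightarrow> (\<exists>a b. \<forall>x. f x = lin a x * (lin b x)^2)"
proof
  assume "\<forall>u x. F6u f u x = 0"
  then show "\<exists>a b. \<forall>x. f x = lin a x * (lin b x)^2" using hard_dir[OF assms] by blast
next
  assume "\<exists>a b. \<forall>x. f x = lin a x * (lin b x)^2"
  then show "\<forall>u x. F6u f u x = 0" using easy_dir by blast
qed

end
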